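(* Let $S$ be a $\tau$-mutation system over $\mathcal{A}=\{a_0,\dots,a_{d-1}\}$ with starting word $w$ of length $m$, and let $n\in\mathbb{N}$. Let $\mathbf{M}$ be the $d\times d$ substitution matrix $\mathbf{M}_{i,j}=\mathbb{E}[\mathrm{ct}_{\vartheta(a_j)}(a_i)]$. Then the expected vector of symbol frequencies in $S(n)$ satisfies \[\mathbb{E}\big[\mathbf{fr}^{(1)}_{S(n)}\big]=\frac{\mathbb{E}\big[\mathbf{ct}^{(1)}_{S(n)}\big]}{m+n(\tau-1)}=\frac{1}{m+n(\tau-1)}\prod_{j=0}^{n-1}\frac{1}{m+j(\tau-1)}\Big(\mathbf{M}+(m+j(\tau-1)-1)\mathbf{I}\Big)\cdot\mathbf{ct}^{(1)}_w .\]
   Context: Let $\mathcal{A}=\{a_0,\dots,a_{d-1}\}$ be a finite alphabet and $\mathcal{A}^\star$ the set of finite nonempty words over $\mathcal{A}$. A mutation law $(\vartheta,\mathbb{P})$ assigns to each $a_t$ a finitely supported probability distribution $\mathbb{P}_{a_t}$ on $\mathcal{A}^\star$; $\vartheta(a_t)$ denotes a random word with law $\mathbb{P}_{a_t}$. It is a $\tau$-mutation law ($\tau\in\mathbb{N}$) if each $\mathbb{P}_{a_t}$ is supported on $\mathcal{A}^\tau$, and an average $\tau$-mutation law if $\mathbb{E}|\vartheta(a_t)|=\tau$ for all $t$. A mutation step applied to $w=w_0\cdots w_{m-1}$ chooses $i\in\{0,\dots,m-1\}$ uniformly at random and replaces $w_i$ by an independent random word with law $\mathbb{P}_{w_i}$,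 giving $\vartheta(w)=w_0\cdots w_{i-1}\vartheta(w_i)w_{i+1}\cdots w_{m-1}$. A mutation system with starting word $w$ is $S(0)=w$, $S(n)=\vartheta(S(n-1))$ with fresh independent randomness at each step; it is a ($\text{average}$) $\tau$-mutation system if its law is. For words $u,v$ with $|u|\le|v|$, $\mathrm{ct}_v(u)$ is the number of $i\in\{0,\dots,|v|-1\}$ with $v_iv_{i+1}\cdots v_{i+|u|-1}=u$, indices taken cyclically modulo $|v|$. For $k\in\mathbb{N}$, $\mathbf{ct}^{(k)}_v\in\mathbb{R}^{d^k}$ is the vector $(\mathrm{ct}_v(u))_{u\in\mathcal{A}^k}$ (coordinates in lexicographic order) and $\mathbf{fr}^{(k)}_v=\mathbf{ct}^{(k)}_v/|v|$. The matrices in the product commute, so the order of the product is immaterial. *)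

theory Defs
  imports "HOL-Probability.Probability" "Jordan_Normal_Form.Matrix"
begin

text \<open>Alphabet: letters are the naturals 0..d-1 (a_t is represented by t).
  Words are nat lists; nonempty words over the alphabet.\<close>

definition words :: "nat \<Rightarrow> nat list set" where
  "words d = {u. u \<noteq> [] \<and> set u \<subseteq> {..<d}}"

definition mutation_law :: "nat \<Rightarrow> (nat \<Rightarrow> nat list pmf) \<Rightarrow> bool" where
  "mutation_law d P \<longleftrightarrow> (\<forall>t<d. finite (set_pmf (P t)) \<and> set_pmf (P t) \<subseteq> words d)"

definition tau_mutation_law :: "nat \<Rightarrow> nat \<Rightarrow> (nat \<Rightarrow> nat list pmf) \<Rightarrow> bool" where
  "tau_mutation_law d \<tau> P \<longleftrightarrow> mutation_law d P \<and>
     (\<forall>t<d. \<forall>u\<in>set_pmf (P t). length u = \<tau>)"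

definition mutate :: "(nat \<Rightarrow> nat list pmf) \<Rightarrow> nat list \<Rightarrow> nat list pmf" where
  "mutate P w = bind_pmf (pmf_of_set {..<length w})
     (\<lambda>i. map_pmf (\<lambda>u. take i w @ u @ drop (Suc i) w) (P (w ! i)))"

primrec mutation_system :: "(nat \<Rightarrow> nat list pmf) \<Rightarrow> nat list \<Rightarrow> nat \<Rightarrow> nat list pmf" where
  "mutation_system P w 0 = return_pmf w"
| "mutation_system P w (Suc n) = bind_pmf (mutation_system P w n) (mutate P)"

definition ct :: "nat list \<Rightarrow> nat list \<Rightarrow> nat" where
  "ct v u = card {i. i < length v \<and> (\<forall>j<length u. v ! ((i + j) mod length v) = u ! j)}"

definition ct1 :: "nat \<Rightarrow> nat list \<Rightarrow> real vec" where
  "ct1 d v = vec d (\<lambda>i. real (ct v [i]))"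

definition fr1 :: "nat \<Rightarrow> nat list \<Rightarrow> real vec" where
  "fr1 d v = vec d (\<lambda>i. real (ct v [i]) / real (length v))"

definition expected_vec :: "nat \<Rightarrow> 'a pmf \<Rightarrow> ('a \<Rightarrow> real vec) \<Rightarrow> real vec" where
  "expected_vec d p f = vec d (\<lambda>i. measure_pmf.expectation p (\<lambda>x. f x $ i))"

definition subst_matrix :: "nat \<Rightarrow> (nat \<Rightarrow> nat list pmf) \<Rightarrow> real mat" where
  "subst_matrix d P = mat d d (\<lambda>(i,j). measure_pmf.expectation (P j) (\<lambda>u. real (ct u [i])))"

end

theory Submission
  imports Defs
begin

definition cnt :: "nat list \<Rightarrow> nat \<Rightarrow> nat" where
  "cnt v a = length (filter (\<lambda>x. x = a) v)"

lemma ct_single: "ct v [a] = cnt v a"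
proof -
  have "{i. i < length v \<and> (\<forall>j<length [a]. v ! ((i + j) mod length v) = [a] ! j)}
        = {i. i < length v \<and> v ! i = a}" by auto
  then show ?thesis unfolding ct_def cnt_def by (simp add: length_filter_conv_card)
qed

lemma cnt_append[simp]: "cnt (xs @ ys) a = cnt xs a + cnt ys a"
  by (simp add: cnt_def)

lemma cnt_replace:
  assumes "i < length v"
  shows "real (cnt (take i v @ u @ drop (Suc i) v) a)
       = real (cnt v a) - (if v ! i = a then 1 else 0) + real (cnt u a)"
proof -
  have "cnt v a = cnt (take i v @ (v!i) # drop (Suc i) v) a"
    using id_take_nth_drop[OF assms] by simp
  also have "\<dots> = cnt (take i v) a + (if v ! i = a then 1 else 0) + cnt (drop (Suc i) v) a"
    by (simp add: cnt_def)
  finally show ?thesis by simp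
qed

lemma sum_group:
  assumes "set v \<subseteq> {..<d}"
  shows "(\<Sum>i<length v. f (v ! i)) = (\<Sum>j<d. f j * real (cnt v j))"
  using assms
proof (induction v)
  case Nil
  then show ?case by (simp add: cnt_def)
next
  case (Cons x v)
  have "(\<Sum>i<length (x#v). f ((x#v) ! i)) = f x + (\<Sum>i<length v. f (v ! i))"
    unfolding length_Cons sum.lessThan_Suc_shift by simp
  also have "\<dots> = f x + (\<Sum>j<d. f j * real (cnt v j))" using Cons by simp
  also have "\<dots> = (\<Sum>j<d. f j * real (cnt (x#v) j))"
  proof -
    have "(\<Sum>j<d. f j * real (cnt (x#v) j)) = (\<Sum>j<d. f j * real (cnt v j) + (if j = x then f j else 0))"
      by (intro sum.cong) (auto simp: cnt_def algebra_simps)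
    also have "\<dots> = (\<Sum>j<d. f j * real (cnt v j)) + f x"
      using Cons.prems by (simp add: sum.distrib)
    finally show ?thesis by simp
  qed
  finally show ?case .
qed

lemma sum_ind: "(\<Sum>i<length v. (if v ! i = a then 1 else 0 :: real)) = real (cnt v a)"
proof (induction v)
  case Nil
  then show ?case by (simp add: cnt_def)
next
  case (Cons x v)
  then show ?case unfolding length_Cons sum.lessThan_Suc_shift by (simp add: cnt_def)
qed

lemma exp_const_pmf[simp]: "measure_pmf.expectation p (\<lambda>_. c::real) = c"
  by simp

lemma exp_bind:
  assumes "finite (set_pmf p)" "\<And>x. x \<in> set_pmf p \<Longrightarrow> finite (set_pmf (f x))"
  shows "measure_pmf.expectation (p \<bind> f) (h :: _ \<Rightarrow> real)
     = measure_pmf.expectation p (\<lambda>x. measure_pmf.expectation (f x) h)"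
  using assms
  by (subst pmf_expectation_bind[of "set_pmf p"]) (auto simp: integral_measure_pmf[of "set_pmf p"])

lemma set_mutate:
  assumes "v \<noteq> []"
  shows "set_pmf (mutate P v) = (\<Union>i<length v. (\<lambda>u. take i v @ u @ drop (Suc i) v) ` set_pmf (P (v ! i)))"
  using assms by (simp add: mutate_def lessThan_empty_iff)

lemma finite_mutate:
  assumes "v \<noteq> []" "\<And>i. i < length v \<Longrightarrow> finite (set_pmf (P (v ! i)))"
  shows "finite (set_pmf (mutate P v))"
  using assms by (simp add: set_mutate)

lemma step_exp:
  assumes law: "mutation_law d P" and v: "v \<in> words d"
  shows "measure_pmf.expectation (mutate P v) (\<lambda>x. real (ct x [a]))
     = (1 / real (length v)) * ((\<Sum>j<d. measure_pmf.expectation (P j) (\<lambda>u. real (ct u [a])) * real (ct v [j]))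
          + (real (length v) - 1) * real (ct v [a]))"
proof -
  let ?l = "length v"
  have vne: "v \<noteq> []" and vd: "set v \<subseteq> {..<d}" using v by (auto simp: words_def)
  have vi: "i < ?l \<Longrightarrow> v ! i < d" for i using vd nth_mem by blast
  have fin: "i < ?l \<Longrightarrow> finite (set_pmf (P (v ! i)))" for i using law vi by (auto simp: mutation_law_def)
  define M where "M = (\<lambda>j. measure_pmf.expectation (P j) (\<lambda>u. real (cnt u a)))"
  have "measure_pmf.expectation (mutate P v) (\<lambda>x. real (ct x [a]))
      = (\<Sum>i<?l. measure_pmf.expectation (map_pmf (\<lambda>u. take i v @ u @ drop (Suc i) v) (P (v ! i))) (\<lambda>x. real (ct x [a])) / real ?l)"
    unfolding mutate_def
    using vne fin by (subst pmf_expectation_bind_pmf_of_set) (auto simp: lessThan_empty_iff divide_inverse mult.commute)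
  also have "\<dots> = (\<Sum>i<?l. (real (cnt v a) - (if v ! i = a then 1 else 0) + M (v ! i)) / real ?l)"
  proof (intro sum.cong refl)
    fix i assume i: "i \<in> {..<?l}"
    have "measure_pmf.expectation (map_pmf (\<lambda>u. take i v @ u @ drop (Suc i) v) (P (v ! i))) (\<lambda>x. real (ct x [a]))
       = measure_pmf.expectation (P (v ! i)) (\<lambda>u. real (cnt v a) - (if v ! i = a then 1 else 0) + real (cnt u a))"
      using i by (simp add: ct_single cnt_replace del: cnt_append)
    also have "\<dots> = real (cnt v a) - (if v ! i = a then 1 else 0) + M (v ! i)"
      unfolding M_def using fin[of i] i
      by (subst Bochner_Integration.integral_add) (auto intro: integrable_measure_pmf_finite)
    finally show "measure_pmf.expectation (map_pmf (\<lambda>u. take i v @ u @ drop (Suc i) v) (P (v ! i))) (\<lambda>x. real (ct x [a])) / real ?l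
       = (real (cnt v a) - (if v ! i = a then 1 else 0) + M (v ! i)) / real ?l" by simp
  qed
  also have "\<dots> = (1 / real ?l) * (real ?l * real (cnt v a) - (\<Sum>i<?l. (if v ! i = a then 1 else 0)) + (\<Sum>i<?l. M (v ! i)))"
    by (simp add: sum_divide_distrib[symmetric] sum.distrib sum_subtractf)
  also have "(\<Sum>i<?l. (if v ! i = a then 1 else 0)) = real (cnt v a)"
    by (rule sum_ind)
  also have "(\<Sum>i<?l. M (v ! i)) = (\<Sum>j<d. M j * real (cnt v j))"
    by (rule sum_group[OF vd])
  finally have "measure_pmf.expectation (mutate P v) (\<lambda>x. real (ct x [a])) =
    1 / real ?l * (real ?l * real (cnt v a) - real (cnt v a) + (\<Sum>j<d. M j * real (cnt v j)))" .
  moreover have "measure_pmf.expectation (P j) (\<lambda>u. real (ct u [a])) = M j" for j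
    by (simp add: M_def ct_single)
  ultimately show ?thesis by (simp add: ct_single left_diff_distrib)
qed

lemma matvec_entry:
  fixes M :: "real mat"
  assumes M: "M \<in> carrier_mat d d" and x: "x \<in> carrier_vec d" and a: "a < d"
  shows "vec_index ((c \<cdot>\<^sub>m (M + b \<cdot>\<^sub>m 1\<^sub>m d)) *\<^sub>v x) a
       = c * ((\<Sum>j<d. M $$ (a,j) * vec_index x j) + b * vec_index x a)"
proof -
  have "vec_index ((c \<cdot>\<^sub>m (M + b \<cdot>\<^sub>m 1\<^sub>m d)) *\<^sub>v x) a
      = (\<Sum>j\<in>{0..<d}. c * (M $$ (a,j) + b * (if j = a then 1 else 0)) * vec_index x j)"
    using M x a by (simp add: scalar_prod_def)
  also have "\<dots> = (\<Sum>j<d. c * (M $$ (a,j) * vec_index x j) + (if a = j then c * b * vec_index x j else 0))"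
    by (intro sum.cong) (auto simp: algebra_simps)
  also have "\<dots> = c * ((\<Sum>j<d. M $$ (a,j) * vec_index x j) + b * vec_index x a)"
    using a by (simp add: sum.distrib sum_distrib_left algebra_simps)
  finally show ?thesis .
qed

lemma comm_gen:
  assumes X: "X \<in> carrier_mat d d"
  shows "X * (X + k \<cdot>\<^sub>m 1\<^sub>m d) = (X + k \<cdot>\<^sub>m 1\<^sub>m d) * (X :: real mat)"
proof -
  have 1: "X * (X + k \<cdot>\<^sub>m 1\<^sub>m d) = X * X + X * (k \<cdot>\<^sub>m 1\<^sub>m d)"
    using X by (intro mult_add_distrib_mat[of _ d d]) auto
  have 2: "X * (k \<cdot>\<^sub>m 1\<^sub>m d) = k \<cdot>\<^sub>m X"
    using mult_smult_distrib[OF X one_carrier_mat] right_mult_one_mat[OF X] by simp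
  have 3: "(X + k \<cdot>\<^sub>m 1\<^sub>m d) * X = X * X + (k \<cdot>\<^sub>m 1\<^sub>m d) * X"
    using X by (intro add_mult_distrib_mat[of _ d d]) auto
  have 4: "(k \<cdot>\<^sub>m 1\<^sub>m d) * X = k \<cdot>\<^sub>m X"
    using mult_smult_assoc_mat[OF one_carrier_mat X] left_mult_one_mat[OF X] by simp
  show ?thesis using 1 2 3 4 by simp
qed

lemma smult_comm: "(c::real) \<cdot>\<^sub>m (c' \<cdot>\<^sub>m Z) = c' \<cdot>\<^sub>m (c \<cdot>\<^sub>m Z)"
  by (intro eq_matI) (auto simp: mult.left_commute)

lemma comm_A:
  assumes M: "M \<in> carrier_mat d d"
  shows "(c \<cdot>\<^sub>m (M + b \<cdot>\<^sub>m 1\<^sub>m d)) * (c' \<cdot>\<^sub>m (M + b' \<cdot>\<^sub>m 1\<^sub>m d))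
       = (c' \<cdot>\<^sub>m (M + b' \<cdot>\<^sub>m 1\<^sub>m d)) * (c \<cdot>\<^sub>m (M + b \<cdot>\<^sub>m (1\<^sub>m d :: real mat)))"
proof -
  define X where "X = M + b \<cdot>\<^sub>m (1\<^sub>m d :: real mat)"
  have X: "X \<in> carrier_mat d d" using M by (simp add: X_def)
  have Y: "M + b' \<cdot>\<^sub>m 1\<^sub>m d = X + (b' - b) \<cdot>\<^sub>m 1\<^sub>m d"
    using M unfolding X_def by (intro eq_matI) (auto simp: algebra_simps)
  define Y where "Y = X + (b' - b) \<cdot>\<^sub>m (1\<^sub>m d :: real mat)"
  have Yc: "Y \<in> carrier_mat d d" using X by (simp add: Y_def)
  have XY: "X * Y = Y * X" unfolding Y_def by (rule comm_gen[OF X])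
  have e1: "(c \<cdot>\<^sub>m X) * (c' \<cdot>\<^sub>m Y) = c \<cdot>\<^sub>m (X * (c' \<cdot>\<^sub>m Y))"
    by (rule mult_smult_assoc_mat[OF X smult_carrier_mat[OF Yc]])
  have e2: "X * (c' \<cdot>\<^sub>m Y) = c' \<cdot>\<^sub>m (X * Y)"
    by (rule mult_smult_distrib[OF X Yc])
  have e3: "(c' \<cdot>\<^sub>m Y) * (c \<cdot>\<^sub>m X) = c' \<cdot>\<^sub>m (Y * (c \<cdot>\<^sub>m X))"
    by (rule mult_smult_assoc_mat[OF Yc smult_carrier_mat[OF X]])
  have e4: "Y * (c \<cdot>\<^sub>m X) = c \<cdot>\<^sub>m (Y * X)"
    by (rule mult_smult_distrib[OF Yc X])
  have "(c \<cdot>\<^sub>m X) * (c' \<cdot>\<^sub>m Y) = (c' \<cdot>\<^sub>m Y) * (c \<cdot>\<^sub>m X)"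
    unfolding e1 e2 e3 e4 XY by (rule smult_comm)
  then show ?thesis unfolding Y_def[symmetric] Y[folded Y_def] X_def .
qed

lemma foldr_comm:
  fixes Af :: "nat \<Rightarrow> real mat"
  assumes car: "\<And>j. Af j \<in> carrier_mat d d"
    and comm: "\<And>j k. Af j * Af k = Af k * Af j"
  shows "foldr (\<lambda>j A. Af j * A) xs (Af k) = Af k * foldr (\<lambda>j A. Af j * A) xs (1\<^sub>m d)
     \<and> foldr (\<lambda>j A. Af j * A) xs (1\<^sub>m d) \<in> carrier_mat d d"
proof (induction xs)
  case Nil
  then show ?case using right_mult_one_mat[OF car[of k]] by simp
next
  case (Cons x xs)
  let ?F = "foldr (\<lambda>j A. Af j * A) xs (1\<^sub>m d)"
  have F: "?F \<in> carrier_mat d d" using Cons by simp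
  have "foldr (\<lambda>j A. Af j * A) (x # xs) (Af k) = Af x * (Af k * ?F)" using Cons by simp
  also have "\<dots> = (Af x * Af k) * ?F" using assoc_mult_mat[OF car[of x] car[of k] F] by simp
  also have "\<dots> = (Af k * Af x) * ?F" using comm by simp
  also have "\<dots> = Af k * (Af x * ?F)" using assoc_mult_mat[OF car[of k] car[of x] F] by simp
  moreover have "Af x * ?F \<in> carrier_mat d d" using mult_carrier_mat[OF car[of x] F] .
  ultimately show ?case by simp
qed

lemma lin_exp:
  fixes c e :: real and k :: "nat \<Rightarrow> real" and g :: "'a \<Rightarrow> nat \<Rightarrow> real" and h :: "'a \<Rightarrow> real"
  assumes "finite (set_pmf p)"
  shows "measure_pmf.expectation p (\<lambda>v. c * ((\<Sum>j<d. k j * g v j) + e * h v))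
     = c * ((\<Sum>j<d. k j * measure_pmf.expectation p (\<lambda>v. g v j)) + e * measure_pmf.expectation p h)"
proof -
  have I: "integrable p f" for f :: "_ \<Rightarrow> real" by (rule integrable_measure_pmf_finite[OF assms])
  have "measure_pmf.expectation p (\<lambda>v. c * ((\<Sum>j<d. k j * g v j) + e * h v))
     = c * measure_pmf.expectation p (\<lambda>v. (\<Sum>j<d. k j * g v j) + e * h v)" by (rule integral_mult_right_zero)
  also have "measure_pmf.expectation p (\<lambda>v. (\<Sum>j<d. k j * g v j) + e * h v)
     = measure_pmf.expectation p (\<lambda>v. (\<Sum>j<d. k j * g v j)) + measure_pmf.expectation p (\<lambda>v. e * h v)"
    by (rule Bochner_Integration.integral_add[OF I I])
  also have "measure_pmf.expectation p (\<lambda>v. (\<Sum>j<d. k j * g v j)) = (\<Sum>j<d. measure_pmf.expectation p (\<lambda>v. k j * g v j))"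
    by (rule Bochner_Integration.integral_sum) (rule I)
  finally show ?thesis by simp
qed

lemma tau_pos:
  assumes "tau_mutation_law d \<tau> P" "w \<in> words d"
  shows "\<tau> \<ge> 1"
proof -
  have d: "0 < d" using assms(2) by (cases w) (auto simp: words_def)
  obtain u where u: "u \<in> set_pmf (P 0)" using set_pmf_not_empty by fast
  have "u \<in> words d" "length u = \<tau>" using assms(1) d u by (auto simp: tau_mutation_law_def mutation_law_def)
  then show ?thesis by (cases u) (auto simp: words_def)
qed

lemma invariant:
  assumes law: "tau_mutation_law d \<tau> P" and w: "w \<in> words d"
  shows "finite (set_pmf (mutation_system P w n)) \<and>
    (\<forall>v\<in>set_pmf (mutation_system P w n). v \<in> words d \<and> length v = length w + n * (\<tau> - 1))"
proof (induction n)
  case 0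
  then show ?case using w by simp
next
  case (Suc n)
  have t1: "\<tau> \<ge> 1" by (rule tau_pos[OF law w])
  have ml: "mutation_law d P" using law by (simp add: tau_mutation_law_def)
  have props: "finite (set_pmf (mutate P v)) \<and> (\<forall>x\<in>set_pmf (mutate P v). x \<in> words d \<and> length x = length w + Suc n * (\<tau> - 1))"
    if v: "v \<in> set_pmf (mutation_system P w n)" for v
  proof -
    have vw: "v \<in> words d" and lv: "length v = length w + n * (\<tau> - 1)" using Suc v by auto
    have vne: "v \<noteq> []" and vd: "set v \<subseteq> {..<d}" using vw by (auto simp: words_def)
    have vi: "i < length v \<Longrightarrow> v ! i < d" for i using vd nth_mem by blast
    have fin: "i < length v \<Longrightarrow> finite (set_pmf (P (v ! i)))" for i using ml vi by (auto simp: mutation_law_def)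
    have "x \<in> words d \<and> length x = length w + Suc n * (\<tau> - 1)" if x: "x \<in> set_pmf (mutate P v)" for x
    proof -
      obtain i u where i: "i < length v" and u: "u \<in> set_pmf (P (v ! i))"
        and xe: "x = take i v @ u @ drop (Suc i) v"
        using x vne by (auto simp: set_mutate)
      have uw: "u \<in> words d" and lu: "length u = \<tau>"
        using law vi[OF i] u by (auto simp: tau_mutation_law_def mutation_law_def)
      have "set x \<subseteq> {..<d}" using uw vd set_take_subset[of i v] set_drop_subset[of "Suc i" v]
        by (auto simp: xe words_def)
      moreover have "x \<noteq> []" using uw by (auto simp: xe words_def)
      moreover have "length x = length w + Suc n * (\<tau> - 1)"
        using i lu lv t1 by (auto simp: xe)
      ultimately show ?thesis by (simp add: words_def)
    qed
    then show ?thesis using finite_mutate[of v P, OF vne fin] by blast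
  qed
  show ?case using Suc props by auto
qed

lemma pmf_exp_cong:
  assumes "\<And>x. x \<in> set_pmf p \<Longrightarrow> f x = g x"
  shows "measure_pmf.expectation p f = measure_pmf.expectation p (g :: _ \<Rightarrow> real)"
  using assms by (intro integral_cong_AE) (auto intro: AE_pmfI)

theorem mainTheorem4:
  fixes d \<tau> n :: nat and P :: "nat \<Rightarrow> nat list pmf" and w :: "nat list"
  assumes "tau_mutation_law d \<tau> P"
    and "w \<in> words d"
  defines "m \<equiv> length w"
  defines "L \<equiv> \<lambda>j::nat. real m + real j * (real \<tau> - 1)"
  shows "expected_vec d (mutation_system P w n) (fr1 d)
           = (1 / L n) \<cdot>\<^sub>v expected_vec d (mutation_system P w n) (ct1 d)
       \<and> expected_vec d (mutation_system P w n) (fr1 d)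
           = (1 / L n) \<cdot>\<^sub>v
             ((foldr (\<lambda>j A. ((1 / L j) \<cdot>\<^sub>m (subst_matrix d P + (L j - 1) \<cdot>\<^sub>m 1\<^sub>m d)) * A)
                 [0..<n] (1\<^sub>m d)) *\<^sub>v ct1 d w)"
proof -
  note law = assms(1) and w = assms(2)
  have t1: "\<tau> \<ge> 1" by (rule tau_pos[OF law w])
  have ml: "mutation_law d P" using law by (simp add: tau_mutation_law_def)
  define M where "M = subst_matrix d P"
  have Mc: "M \<in> carrier_mat d d" by (simp add: M_def subst_matrix_def)
  define Af where "Af = (\<lambda>j. (1 / L j) \<cdot>\<^sub>m (M + (L j - 1) \<cdot>\<^sub>m 1\<^sub>m d))"
  have car: "Af j \<in> carrier_mat d d" for j using Mc by (simp add: Af_def)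
  have comm: "Af j * Af k = Af k * Af j" for j k unfolding Af_def by (rule comm_A[OF Mc])
  define S where "S = mutation_system P w"
  have inv: "finite (set_pmf (S k)) \<and> (\<forall>v\<in>set_pmf (S k). v \<in> words d \<and> length v = m + k * (\<tau> - 1))" for k
    unfolding S_def m_def by (rule invariant[OF law w])
  have len: "real (length v) = L k" if "v \<in> set_pmf (S k)" for v k
  proof -
    have "length v = m + k * (\<tau> - 1)" using inv[of k] that by auto
    then show ?thesis using t1 by (simp add: L_def of_nat_diff)
  qed
  have step: "expected_vec d (S (Suc k)) (ct1 d) = Af k *\<^sub>v expected_vec d (S k) (ct1 d)" for k
  proof (rule eq_vecI)
    fix a assume "a < dim_vec (Af k *\<^sub>v expected_vec d (S k) (ct1 d))"
    then have a: "a < d" using car[of k] by simp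
    have "vec_index (expected_vec d (S (Suc k)) (ct1 d)) a
        = measure_pmf.expectation (S k \<bind> mutate P) (\<lambda>x. real (ct x [a]))"
      using a by (simp add: expected_vec_def ct1_def S_def)
    also have "\<dots> = measure_pmf.expectation (S k) (\<lambda>v. measure_pmf.expectation (mutate P v) (\<lambda>x. real (ct x [a])))"
    proof (rule exp_bind)
      show "finite (set_pmf (S k))" using inv by blast
      fix v assume v: "v \<in> set_pmf (S k)"
      then have vw: "v \<in> words d" using inv by blast
      then have vne: "v \<noteq> []" and vd: "set v \<subseteq> {..<d}" by (auto simp: words_def)
      have vi: "i < length v \<Longrightarrow> v ! i < d" for i using vd nth_mem by blast
      show "finite (set_pmf (mutate P v))"
        using finite_mutate[of v P] vne vi ml by (auto simp: mutation_law_def)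
    qed
    also have "\<dots> = measure_pmf.expectation (S k) (\<lambda>v. (1 / L k) * ((\<Sum>j<d. measure_pmf.expectation (P j) (\<lambda>u. real (ct u [a])) * real (ct v [j]))
          + (L k - 1) * real (ct v [a])))"
    proof (rule pmf_exp_cong)
      fix v assume v: "v \<in> set_pmf (S k)"
      then have vw: "v \<in> words d" using inv by blast
      show "measure_pmf.expectation (mutate P v) (\<lambda>x. real (ct x [a])) = (1 / L k) * ((\<Sum>j<d. measure_pmf.expectation (P j) (\<lambda>u. real (ct u [a])) * real (ct v [j]))
          + (L k - 1) * real (ct v [a]))"
        using step_exp[OF ml vw, of a] len[OF v] by simp
    qed
    also have "\<dots> = (1 / L k) * ((\<Sum>j<d. measure_pmf.expectation (P j) (\<lambda>u. real (ct u [a])) * measure_pmf.expectation (S k) (\<lambda>v. real (ct v [j])))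
          + (L k - 1) * measure_pmf.expectation (S k) (\<lambda>v. real (ct v [a])))"
      using inv by (intro lin_exp[where g = "\<lambda>v j. real (ct v [j])"]) blast
    also have "\<dots> = (1 / L k) * ((\<Sum>j<d. M $$ (a,j) * vec_index (expected_vec d (S k) (ct1 d)) j)
          + (L k - 1) * vec_index (expected_vec d (S k) (ct1 d)) a)"
      using a by (simp add: M_def subst_matrix_def expected_vec_def ct1_def)
    also have "\<dots> = vec_index (Af k *\<^sub>v expected_vec d (S k) (ct1 d)) a"
      unfolding Af_def by (rule matvec_entry[OF Mc _ a, symmetric]) (simp add: expected_vec_def)
    finally show "vec_index (expected_vec d (S (Suc k)) (ct1 d)) a = vec_index (Af k *\<^sub>v expected_vec d (S k) (ct1 d)) a" .
  qed (use carrier_matD[OF car[of k]] in \<open>simp add: expected_vec_def\<close>)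
  have ctw: "ct1 d w \<in> carrier_vec d" by (simp add: ct1_def)
  have F: "expected_vec d (S k) (ct1 d) = foldr (\<lambda>j A. Af j * A) [0..<k] (1\<^sub>m d) *\<^sub>v ct1 d w" for k
  proof (induction k)
    case 0
    have "expected_vec d (S 0) (ct1 d) = ct1 d w"
      by (intro eq_vecI) (simp_all add: S_def expected_vec_def ct1_def)
    then show ?case using ctw by simp
  next
    case (Suc k)
    let ?F = "foldr (\<lambda>j A. Af j * A) [0..<k] (1\<^sub>m d)"
    have FF: "foldr (\<lambda>j A. Af j * A) [0..<Suc k] (1\<^sub>m d) = Af k * ?F"
    proof -
      have "foldr (\<lambda>j A. Af j * A) [0..<Suc k] (1\<^sub>m d) = foldr (\<lambda>j A. Af j * A) [0..<k] (Af k * 1\<^sub>m d)"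
        by simp
      also have "Af k * 1\<^sub>m d = Af k" using right_mult_one_mat[OF car[of k]] .
      finally show ?thesis using foldr_comm[where Af = Af and d = d and xs = "[0..<k]" and k = k, OF car comm] by simp
    qed
    have Fc: "?F \<in> carrier_mat d d" using foldr_comm[where Af = Af and d = d and xs = "[0..<k]" and k = k, OF car comm] by simp
    show ?case unfolding step Suc FF using assoc_mult_mat_vec[OF car[of k] Fc ctw] by simp
  qed
  have fr: "expected_vec d (S n) (fr1 d) = (1 / L n) \<cdot>\<^sub>v expected_vec d (S n) (ct1 d)"
  proof (rule eq_vecI)
    fix a assume "a < dim_vec ((1 / L n) \<cdot>\<^sub>v expected_vec d (S n) (ct1 d))"
    then have a: "a < d" by (simp add: expected_vec_def)
    have "vec_index (expected_vec d (S n) (fr1 d)) a = measure_pmf.expectation (S n) (\<lambda>v. real (ct v [a]) / real (length v))"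
      using a by (simp add: expected_vec_def fr1_def)
    also have "\<dots> = measure_pmf.expectation (S n) (\<lambda>v. (1 / L n) * real (ct v [a]))"
      by (rule pmf_exp_cong) (simp add: len)
    also have "\<dots> = (1 / L n) * measure_pmf.expectation (S n) (\<lambda>v. real (ct v [a]))"
      by (rule integral_mult_right_zero)
    also have "\<dots> = vec_index ((1 / L n) \<cdot>\<^sub>v expected_vec d (S n) (ct1 d)) a"
      using a by (simp add: expected_vec_def ct1_def)
    finally show "vec_index (expected_vec d (S n) (fr1 d)) a = vec_index ((1 / L n) \<cdot>\<^sub>v expected_vec d (S n) (ct1 d)) a" .
  qed (simp add: expected_vec_def)
  show ?thesis using fr F[of n] unfolding S_def Af_def M_def by simp
qed

end
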